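(* Let $g(z)=z^3-z^2+7z+1$, $A=\{z\in\mathbb{C}:\Re z\le0,\ |g(z)|=1\}$ and $B=\{z\in\mathbb{C}:\Re z>0,\ |g(z)|=1\}$. Then $A\subset D(0,0.275)$ and $B\subset D(0,2.75)$, where $D(0,r)$ is the open disc of radius $r$ centered at $0$. *)

theory Defs
  imports "HOL-Analysis.Analysis"
begin

end

theory Submission
  imports Defs
begin

lemma part2:
  fixes x p :: real
  assumes x: "x \<ge> 0" and hp: "p \<ge> 121/16"
  shows "p^3 - 13*p^2 + 51*p - x*(2*p^2+20*p-14) + x^2*(28*p-4) + 8*x^3 > 0"
proof -
  define A where "A = 28*p-4"
  define B where "B = 2*p^2+20*p-14-216/25"
  define C where "C = p^3-13*p^2+51*p - 432/125"
  define w where "w = p - 121/16"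
  have w: "w \<ge> 0" using hp w_def by simp
  have A: "A > 0" using hp A_def by simp
  have cube0: "(x - 3/5)^2 * (x + 6/5) \<ge> 0" using x by simp
  have cube: "8*x^3 \<ge> 216/25*x - 432/125"
  proof -
    have "(x - 3/5)^2 * (x + 6/5) = x^3 - 27/25*x + 54/125" by algebra
    thus ?thesis using cube0 by linarith
  qed
  have Deq: "4*A*C - B^2 = 1699081931/10240000 + 163948311/32000*w + 5967673/800*w^2 + 1715*w^3 + 108*w^4"
    unfolding A_def B_def C_def w_def by algebra
  have "1699081931/10240000 + 163948311/32000*w + 5967673/800*w^2 + 1715*w^3 + 108*w^4 > 0"
    using w by (simp add: add_pos_nonneg)
  hence D: "4*A*C - B^2 > 0" using Deq by simp
  have "4*A*(A*x^2 - B*x + C) = (2*A*x - B)^2 + (4*A*C - B^2)" by algebra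
  also have "\<dots> > 0" using D by (simp add: add_nonneg_pos)
  finally have "4*A*(A*x^2 - B*x + C) > 0" .
  hence q: "A*x^2 - B*x + C > 0" using A by (simp add: zero_less_mult_iff)
  have "p^3 - 13*p^2 + 51*p - x*(2*p^2+20*p-14) + x^2*(28*p-4) + 8*x^3 - (A*x^2 - B*x + C) = 8*x^3 - (216/25*x - 432/125)"
    unfolding A_def B_def C_def by algebra
  thus ?thesis using q cube by linarith
qed

lemma part1:
  fixes u t :: real
  assumes u: "u \<ge> 0" and t: "t \<ge> 0" and ut: "u^2 + t \<ge> 121/1600"
  shows "u*(7+u+u^2)*(u^3+u^2+7*u-2) + t*(3*u^4+4*u^3+2*u^2+20*u+51) + t^2*(3*u^2+2*u-13) + t^3 > 0"
proof -
  define M where "M = u*(7+u+u^2)"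
  define h where "h = u^3+u^2+7*u-2"
  have M0: "M \<ge> 0" using u M_def by simp
  have rest: "t*(3*u^4+4*u^3+2*u^2+20*u+51) + t^2*(3*u^2+2*u-13) + t^3 \<ge> t*(t^2-13*t+51)"
  proof -
    have "t*(3*u^4+4*u^3+2*u^2+20*u+51) + t^2*(3*u^2+2*u-13) + t^3 - t*(t^2-13*t+51)
          = t*(3*u^4+4*u^3+2*u^2+20*u) + t^2*(3*u^2+2*u)" by algebra
    moreover have "t*(3*u^4+4*u^3+2*u^2+20*u) + t^2*(3*u^2+2*u) \<ge> 0" using u t by simp
    ultimately show ?thesis by linarith
  qed
  have sq: "t^2-13*t+51 \<ge> 35/4"
  proof -
    have "t^2-13*t+51 = (t-13/2)^2 + 35/4" by algebra
    thus ?thesis by (metis le_add_same_cancel2 zero_le_power2)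
  qed
  have main: "M*h + t*(t^2-13*t+51) > 0"
  proof (cases "u \<ge> 11/40")
    case True
    have "h - 1371/64000 = (u - 11/40)*(u^2 + u*(11/40) + 121/1600 + u + 11/40 + 7)"
      unfolding h_def by algebra
    moreover have "(u - 11/40)*(u^2 + u*(11/40) + 121/1600 + u + 11/40 + 7) \<ge> 0" using True u by simp
    ultimately have "h > 0" by linarith
    moreover have "M > 0" using True M_def u by (simp add: add_pos_nonneg)
    ultimately have "M*h > 0" by simp
    moreover have "t*(t^2-13*t+51) \<ge> 0" using t sq by simp
    ultimately show ?thesis by linarith
  next
    case False
    hence ur: "u < 11/40" by simp
    have Mb: "M \<le> 129371/64000" 
    proof -
      have "u^2 \<le> (11/40)^2" using u ur by (intro power_mono) auto
      hence "7 + u + u^2 \<le> 7 + 11/40 + (11/40)^2" using ur by simp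
      hence "u*(7+u+u^2) \<le> (11/40)*(7 + 11/40 + (11/40)^2)"
        using u ur by (intro mult_mono) auto
      thus ?thesis unfolding M_def by (simp add: power2_eq_square)
    qed
    show ?thesis
    proof (cases "t \<ge> 1/2")
      case True
      have "h \<ge> -2" unfolding h_def using u by simp
      hence "M*h \<ge> M*(-2)" using M0 by (intro mult_left_mono) auto
      moreover have "t*(t^2-13*t+51) \<ge> (1/2)*(35/4)" using True sq by (intro mult_mono) auto
      ultimately show ?thesis using Mb by linarith
    next
      case False
      have tb: "t^2-13*t+51 \<ge> 89/2" using False t zero_le_power2[of t] by linarith
      have tt: "t*(t^2-13*t+51) \<ge> 89/2 * t" using mult_left_mono[OF tb t] by (simp add: mult.commute)
      have hk: "h \<ge> 12443/1600*(u - 11/40)"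
      proof -
        have "h - 1371/64000 - 12443/1600*(u - 11/40) = (u - 11/40)^2 * (u + 2*(11/40) + 1)"
          unfolding h_def by algebra
        moreover have "(u - 11/40)^2 * (u + 2*(11/40) + 1) \<ge> 0" using u by simp
        ultimately show ?thesis by linarith
      qed
      have Mh: "M*h \<ge> M*(12443/1600*(u - 11/40))" using hk M0 by (intro mult_left_mono) auto
      have Mu: "M \<le> u*(7 + 11/40 + (11/40)^2)"
      proof -
        have "u^2 \<le> (11/40)^2" using u ur by (intro power_mono) auto
        hence "7 + u + u^2 \<le> 7 + 11/40 + (11/40)^2" using ur by simp
        thus ?thesis unfolding M_def using u by (intro mult_left_mono) auto
      qed
      have d: "11/40 - u > 0" using ur by simp
      have "M*(12443/1600*(u - 11/40)) = - (12443/1600) * (M*(11/40 - u))" by algebra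
      moreover have "M*(11/40 - u) \<le> u*(7 + 11/40 + (11/40)^2)*(11/40 - u)"
        using Mu d by (intro mult_right_mono) auto
      ultimately have Mh2: "M*h \<ge> - (12443/1600) * (u*(7 + 11/40 + (11/40)^2)*(11/40 - u))"
        using Mh by linarith
      have tl: "t \<ge> (11/40 - u)*(11/40 + u)" using ut by (simp add: algebra_simps power2_eq_square)
      have key: "(12443/1600) * (u*(7 + 11/40 + (11/40)^2)) < 89/2*(11/40 + u)"
        using u ur by (simp add: power2_eq_square)
      have k2: "(12443/1600) * (u*(7 + 11/40 + (11/40)^2)) * (11/40 - u) < 89/2*(11/40 + u) * (11/40 - u)"
        using mult_strict_right_mono[OF key d] .
      have e1: "(12443/1600) * (u*(7 + 11/40 + (11/40)^2)) * (11/40 - u) = (12443/1600) * (u*(7 + 11/40 + (11/40)^2)*(11/40 - u))"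
        by (simp only: mult.assoc)
      have e2: "89/2*(11/40 + u) * (11/40 - u) = 89/2*((11/40 - u)*(11/40 + u))"
        by (metis mult.assoc mult.commute)
      have tl2: "89/2 * t \<ge> 89/2*((11/40 - u)*(11/40 + u))" using tl by simp
      show ?thesis using Mh2 tt tl2 k2 e1 e2 by linarith
    qed
  qed
  have "u*(7+u+u^2)*(u^3+u^2+7*u-2) = M*h" unfolding M_def h_def by simp
  thus ?thesis using main rest by linarith
qed


lemma keyid:
  fixes g :: "complex \<Rightarrow> complex"
  assumes "\<And>z. g z = z^3 - z^2 + 7*z + 1"
  shows "(cmod (g z))^2 - 1 = (Re z^2 + Im z^2)^3 - 13*(Re z^2 + Im z^2)^2 + 51*(Re z^2 + Im z^2)
     - Re z*(2*(Re z^2 + Im z^2)^2+20*(Re z^2 + Im z^2)-14) + Re z^2*(28*(Re z^2 + Im z^2)-4) + 8*Re z^3"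
proof -
  define x where "x = Re z"
  define y where "y = Im z"
  have re: "Re (g z) = x^3 - 3*x*y^2 - x^2 + y^2 + 7*x + 1"
    unfolding x_def y_def assms by (simp add: power3_eq_cube power2_eq_square algebra_simps)
  have im: "Im (g z) = 3*x^2*y - y^3 - 2*x*y + 7*y"
    unfolding x_def y_def assms by (simp add: power3_eq_cube power2_eq_square algebra_simps)
  have "(cmod (g z))^2 = Re (g z)^2 + Im (g z)^2" by (simp add: cmod_power2)
  also have "\<dots> = (x^3 - 3*x*y^2 - x^2 + y^2 + 7*x + 1)^2 + (3*x^2*y - y^3 - 2*x*y + 7*y)^2"
    using re im by simp
  finally have "(cmod (g z))^2 - 1 = (x^2 + y^2)^3 - 13*(x^2 + y^2)^2 + 51*(x^2 + y^2)
     - x*(2*(x^2 + y^2)^2+20*(x^2 + y^2)-14) + x^2*(28*(x^2 + y^2)-4) + 8*x^3"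
    by algebra
  thus ?thesis unfolding x_def y_def .
qed

theorem proposition3p7:
  fixes g :: "complex \<Rightarrow> complex" and A B :: "complex set"
  assumes "\<And>z. g z = z^3 - z^2 + 7*z + 1"
    and "A = {z. Re z \<le> 0 \<and> cmod (g z) = 1}"
    and "B = {z. Re z > 0 \<and> cmod (g z) = 1}"
  shows "A \<subseteq> ball 0 0.275 \<and> B \<subseteq> ball 0 2.75"
proof
  show "A \<subseteq> ball 0 0.275"
  proof
    fix z assume "z \<in> A"
    hence xz: "Re z \<le> 0" and gz: "cmod (g z) = 1" using assms(2) by auto
    have Q0: "(Re z^2 + Im z^2)^3 - 13*(Re z^2 + Im z^2)^2 + 51*(Re z^2 + Im z^2)
     - Re z*(2*(Re z^2 + Im z^2)^2+20*(Re z^2 + Im z^2)-14) + Re z^2*(28*(Re z^2 + Im z^2)-4) + 8*Re z^3 = 0"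
      using keyid[OF assms(1), of z] gz by simp
    show "z \<in> ball 0 0.275"
    proof (rule ccontr)
      assume "z \<notin> ball 0 0.275"
      hence "cmod z \<ge> 11/40" by (simp add: dist_norm)
      hence "(cmod z)^2 \<ge> (11/40)^2" by (intro power_mono) auto
      moreover have "(cmod z)^2 = Re z^2 + Im z^2" by (rule cmod_power2)
      ultimately have c: "(-Re z)^2 + (Im z)^2 \<ge> 121/1600" by (simp add: power_divide)
      have P: "(-Re z)*(7+(-Re z)+(-Re z)^2)*((-Re z)^3+(-Re z)^2+7*(-Re z)-2) + (Im z^2)*(3*(-Re z)^4+4*(-Re z)^3+2*(-Re z)^2+20*(-Re z)+51) + (Im z^2)^2*(3*(-Re z)^2+2*(-Re z)-13) + (Im z^2)^3 > 0"
        by (rule part1) (use xz c in auto)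
      have "(-Re z)*(7+(-Re z)+(-Re z)^2)*((-Re z)^3+(-Re z)^2+7*(-Re z)-2) + (Im z^2)*(3*(-Re z)^4+4*(-Re z)^3+2*(-Re z)^2+20*(-Re z)+51) + (Im z^2)^2*(3*(-Re z)^2+2*(-Re z)-13) + (Im z^2)^3
        = (Re z^2 + Im z^2)^3 - 13*(Re z^2 + Im z^2)^2 + 51*(Re z^2 + Im z^2)
     - Re z*(2*(Re z^2 + Im z^2)^2+20*(Re z^2 + Im z^2)-14) + Re z^2*(28*(Re z^2 + Im z^2)-4) + 8*Re z^3"
        by algebra
      thus False using P Q0 by simp
    qed
  qed
next
  show "B \<subseteq> ball 0 2.75"
  proof
    fix z assume "z \<in> B"
    hence xz: "Re z > 0" and gz: "cmod (g z) = 1" using assms(3) by auto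
    have Q0: "(Re z^2 + Im z^2)^3 - 13*(Re z^2 + Im z^2)^2 + 51*(Re z^2 + Im z^2)
     - Re z*(2*(Re z^2 + Im z^2)^2+20*(Re z^2 + Im z^2)-14) + Re z^2*(28*(Re z^2 + Im z^2)-4) + 8*Re z^3 = 0"
      using keyid[OF assms(1), of z] gz by simp
    show "z \<in> ball 0 2.75"
    proof (rule ccontr)
      assume "z \<notin> ball 0 2.75"
      hence "cmod z \<ge> 11/4" by (simp add: dist_norm)
      hence "(cmod z)^2 \<ge> (11/4)^2" by (intro power_mono) auto
      moreover have "(cmod z)^2 = Re z^2 + Im z^2" by (rule cmod_power2)
      ultimately have c: "Re z^2 + Im z^2 \<ge> 121/16" by (simp add: power_divide)
      have "(Re z^2 + Im z^2)^3 - 13*(Re z^2 + Im z^2)^2 + 51*(Re z^2 + Im z^2)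
     - Re z*(2*(Re z^2 + Im z^2)^2+20*(Re z^2 + Im z^2)-14) + Re z^2*(28*(Re z^2 + Im z^2)-4) + 8*Re z^3 > 0"
        by (rule part2) (use xz c in auto)
      thus False using Q0 by simp
    qed
  qed
qed

end
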